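(* Let $X_0$ be a proper subshift of $X=\mathcal A^{\mathbb Z^d}$ and let $\mu$ be an ergodic shift-invariant measure supported on $X\setminus X_0$. Let $Y$ be the $\mathbb Z^d$-dyadic odometer with its unique invariant measure $\nu$, and let $\bar\mu$ be an ergodic joining of $\mu$ and $\nu$ for the product action $T^{\boldsymbol j}(x,y)=(\sigma^{\boldsymbol j}x,T_Y^{\boldsymbol j}y)$. Then there exists an equivariant tiling $\tau\colon X\times Y\to\mathcal T(\mathbb Z^d)$ such that: (1) for $\bar\mu$-a.e. $(x,y)$ and each $\boldsymbol j\in\mathbb Z^d$ there exists $n\in\mathbb N_0$ with $\tau^{(x,y)}(\boldsymbol j)=\tau^y_n(\boldsymbol j)$; (2) for $\bar\mu$-a.e. $(x,y)$ and each $\boldsymbol j$, if $\tau^{(x,y)}(\boldsymbol j)=\tau^y_n(\boldsymbol j)$ with $n>0$, then $x|_{\tau^{(x,y)}(\boldsymbol j)}\in\mathscr L(X_0)$; (3) for $\bar\mu$-a.e. $(x,y)$ and each $\boldsymbol j$, if $\tau^{(x,y)}(\boldsymbol j)=\tau^y_n(\boldsymbol j)$, then $x|_{\tau^y_{n+1}(\boldsymbol j)}\notin\mathscr L(X_0)$.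
   Context: $X=\mathcal A^{\mathbb Z^d}$ ($\mathcal A$ finite) with shift $(\sigma^{\boldsymbol n}x)_{\boldsymbol m}=x_{\boldsymbol n+\boldsymbol m}$; a subshift is a closed shift-invariant subset. For finite $S\subset\mathbb Z^d$, $x|_S\in\mathscr L(X_0)$ means the pattern $x|_S$ occurs (up to translation) in some point of $X_0$. A tiling of $\mathbb Z^d$ is a partition of $\mathbb Z^d$ into finite nonempty sets; $t(\boldsymbol j)$ denotes the tile containing $\boldsymbol j$; $\mathcal T(\mathbb Z^d)$ is the set of tilings; $\mathsf{Tr}_{\boldsymbol j}(t)=\{S-\boldsymbol j: S\in t\}$. For a $\mathbb Z^d$-action $T$ on $Z$, an equivariant tiling is a map $z\mapsto\tau^z\in\mathcal T(\mathbb Z^d)$ with $\tau^{T^{\boldsymbol j}z}=\mathsf{Tr}_{\boldsymbol j}(\tau^z)$. Dyadic odometer: $\Sigma=\{0,1\}^{\mathbb N_0}$, points written $\ldots y_2y_1y_0$, $\iota$ = addition of $1$ with carry to the left (so $\iota(\ldots111)=\ldots000$). For $y\in\Sigma$, $i\sim_{n,y}j$ if $\iota^i(y)$ and $\iota^j(y)$ agree in all coordinates of index $\ge n$. $Y=\Sigma^d$ with $T_Y^{\boldsymbol j}(y_1,\dots,y_d)=(\iota^{j_1}y_1,\dots,\iota^{j_d}y_d)$. For $y\in Y$, $n\in\mathbb N_0$, $\tau^y_n(\boldsymbol j)=\{\boldsymbol k\in\mathbb Z^d: j_i\sim_{n,y_i}k_i \text{ for } 1\le i\le d\}$ (a grid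 of $2^n\times\dots\times2^n$ boxes). *)

theory Defs
  imports "HOL-Probability.Probability"
begin

text \<open>Lattice Z^d is int^'d (d = CARD('d)). Configurations: int^'d \<Rightarrow> 'a with 'a finite.\<close>

definition shift :: "int^'d \<Rightarrow> (int^'d \<Rightarrow> 'a) \<Rightarrow> (int^'d \<Rightarrow> 'a)" where
  "shift n x = (\<lambda>m. x (n + m))"

definition shift_topology :: "(int^'d \<Rightarrow> 'a) topology" where
  "shift_topology = product_topology (\<lambda>_. discrete_topology UNIV) UNIV"

definition subshift :: "(int^'d \<Rightarrow> 'a::finite) set \<Rightarrow> bool" where
  "subshift X0 \<longleftrightarrow> closedin shift_topology X0 \<and> (\<forall>n. shift n ` X0 = X0)"

text \<open>Borel sigma-algebra of the full shift (= product sigma-algebra).\<close>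
definition MX :: "(int^'d \<Rightarrow> 'a) measure" where
  "MX = PiM UNIV (\<lambda>_. count_space UNIV)"

definition in_language :: "(int^'d \<Rightarrow> 'a) set \<Rightarrow> (int^'d \<Rightarrow> 'a) \<Rightarrow> (int^'d) set \<Rightarrow> bool" where
  "in_language X0 x S \<longleftrightarrow> (\<exists>z\<in>X0. \<exists>v. \<forall>s\<in>S. z (s + v) = x s)"

definition is_tiling :: "(int^'d) set set \<Rightarrow> bool" where
  "is_tiling t \<longleftrightarrow> (\<forall>S\<in>t. finite S \<and> S \<noteq> {}) \<and>
     (\<forall>S\<in>t. \<forall>S'\<in>t. S \<noteq> S' \<longrightarrow> S \<inter> S' = {}) \<and> \<Union>t = UNIV"

definition tile :: "(int^'d) set set \<Rightarrow> int^'d \<Rightarrow> (int^'d) set" where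
  "tile t j = (THE S. S \<in> t \<and> j \<in> S)"

definition Tr :: "int^'d \<Rightarrow> (int^'d) set set \<Rightarrow> (int^'d) set set" where
  "Tr j t = (\<lambda>S. (\<lambda>k. k - j) ` S) ` t"

text \<open>Dyadic odometer on nat \<Rightarrow> bool (coordinate 0 least significant).\<close>
definition iota :: "(nat \<Rightarrow> bool) \<Rightarrow> (nat \<Rightarrow> bool)" where
  "iota y = (\<lambda>n. if (\<forall>m<n. y m) then \<not> y n else y n)"

definition iota_inv :: "(nat \<Rightarrow> bool) \<Rightarrow> (nat \<Rightarrow> bool)" where
  "iota_inv y = (\<lambda>n. if (\<forall>m<n. \<not> y m) then \<not> y n else y n)"

definition iota_pow :: "int \<Rightarrow> (nat \<Rightarrow> bool) \<Rightarrow> (nat \<Rightarrow> bool)" where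
  "iota_pow i = (if i \<ge> 0 then iota ^^ nat i else iota_inv ^^ nat (- i))"

definition odo_rel :: "nat \<Rightarrow> (nat \<Rightarrow> bool) \<Rightarrow> int \<Rightarrow> int \<Rightarrow> bool" where
  "odo_rel n y i j \<longleftrightarrow> (\<forall>m\<ge>n. iota_pow i y m = iota_pow j y m)"

text \<open>Y = Sigma^d, points y :: 'd \<Rightarrow> nat \<Rightarrow> bool.\<close>
definition TY :: "int^'d \<Rightarrow> ('d \<Rightarrow> nat \<Rightarrow> bool) \<Rightarrow> ('d \<Rightarrow> nat \<Rightarrow> bool)" where
  "TY j y = (\<lambda>i. iota_pow (j $ i) (y i))"

definition MY :: "('d \<Rightarrow> nat \<Rightarrow> bool) measure" where
  "MY = PiM UNIV (\<lambda>_. PiM UNIV (\<lambda>_. count_space UNIV))"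

definition odo_tile :: "('d \<Rightarrow> nat \<Rightarrow> bool) \<Rightarrow> nat \<Rightarrow> int^'d \<Rightarrow> (int^'d) set" where
  "odo_tile y n j = {k. \<forall>i. odo_rel n (y i) (j $ i) (k $ i)}"

definition Tprod :: "int^'d \<Rightarrow> (int^'d \<Rightarrow> 'a) \<times> ('d \<Rightarrow> nat \<Rightarrow> bool)
     \<Rightarrow> (int^'d \<Rightarrow> 'a) \<times> ('d \<Rightarrow> nat \<Rightarrow> bool)" where
  "Tprod j p = (shift j (fst p), TY j (snd p))"

definition invariant_meas :: "'b measure \<Rightarrow> (int^'d \<Rightarrow> 'b \<Rightarrow> 'b) \<Rightarrow> bool" where
  "invariant_meas M T \<longleftrightarrow> (\<forall>j. T j \<in> M \<rightarrow>\<^sub>M M \<and>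
      (\<forall>A\<in>sets M. emeasure M (T j -` A \<inter> space M) = emeasure M A))"

definition ergodic_meas :: "'b measure \<Rightarrow> (int^'d \<Rightarrow> 'b \<Rightarrow> 'b) \<Rightarrow> bool" where
  "ergodic_meas M T \<longleftrightarrow> prob_space M \<and> invariant_meas M T \<and>
     (\<forall>A\<in>sets M. (\<forall>j. T j -` A \<inter> space M = A) \<longrightarrow> emeasure M A = 0 \<or> emeasure M A = 1)"

definition equivariant_tiling ::
  "(int^'d \<Rightarrow> 'b \<Rightarrow> 'b) \<Rightarrow> ('b \<Rightarrow> (int^'d) set set) \<Rightarrow> bool" where
  "equivariant_tiling T tau \<longleftrightarrow> (\<forall>z. is_tiling (tau z)) \<and> (\<forall>z j. tau (T j z) = Tr j (tau z))"

end

theory Submission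
  imports Defs
begin

definition low :: "nat \<Rightarrow> (nat \<Rightarrow> bool) \<Rightarrow> int" where
  "low n y = (\<Sum>m<n. if y m then 2^m else 0)"
definition high :: "nat \<Rightarrow> (nat \<Rightarrow> bool) \<Rightarrow> (nat \<Rightarrow> bool)" where
  "high n y = (\<lambda>m. y (m + n))"

lemma low_0[simp]: "low 0 y = 0" by (simp add: low_def)
lemma low_Suc: "low (Suc n) y = low n y + (if y n then 2^n else 0)"
  by (simp add: low_def)

lemma low_bounds: "0 \<le> low n y \<and> low n y < 2^n"
  by (induction n) (auto simp: low_Suc)

lemma low_all: "(\<forall>m<n. y m) \<longleftrightarrow> low n y = 2^n - 1"
proof (induction n)
  case 0 then show ?case by simp
next
  case (Suc n)
  have "(\<forall>m<Suc n. y m) \<longleftrightarrow> (\<forall>m<n. y m) \<and> y n" using less_Suc_eq by auto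
  also have "\<dots> \<longleftrightarrow> low n y = 2^n - 1 \<and> y n" using Suc by simp
  also have "\<dots> \<longleftrightarrow> low (Suc n) y = 2^Suc n - 1"
    using low_bounds[of n y] by (auto simp: low_Suc)
  finally show ?case .
qed

lemma iota_low: "low n (iota y) = (low n y + 1) mod 2^n"
proof (induction n)
  case 0 then show ?case by simp
next
  case (Suc n)
  have b: "0 \<le> low n y" "low n y < 2^n" using low_bounds by auto
  have p: "(2::int)^Suc n = 2 * 2^n" by simp
  show ?case
  proof (cases "\<forall>m<n. y m")
    case True
    then have l: "low n y = 2^n - 1" using low_all by blast
    have i: "iota y n = (\<not> y n)" using True by (simp add: iota_def)
    have z: "low n (iota y) = 0" using Suc l by simp
    show ?thesis
    proof (cases "y n")
      case True
      then show ?thesis using i z l p by (simp add: low_Suc)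
    next
      case False
      have "(2::int)^n mod 2^Suc n = 2^n" using p by (simp add: mod_pos_pos_trivial)
      then show ?thesis using i z l False by (simp add: low_Suc)
    qed
  next
    case False
    then have "low n y \<noteq> 2^n - 1" using low_all by blast
    then have l: "low n y < 2^n - 1" using b by linarith
    have i: "iota y n = y n" using False by (simp add: iota_def)
    have z: "low n (iota y) = low n y + 1" using Suc l b by (simp add: mod_pos_pos_trivial)
    have "low n y + (if y n then 2^n else 0) + 1 < 2^Suc n"
    proof (cases "y n")
      case True
      then have "low n y + (if y n then 2^n else 0) + 1 = low n y + 2^n + 1" by simp
      then show ?thesis using l p by linarith
    next
      case False
      then have "low n y + (if y n then 2^n else 0) + 1 = low n y + 1" by simp
      then show ?thesis using l p b by linarith
    qed
    then have "(low n y + (if y n then 2^n else 0) + 1) mod 2^Suc n = low n y + (if y n then 2^n else 0) + 1"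
      using b by (intro mod_pos_pos_trivial) auto
    then show ?thesis using i z by (simp add: low_Suc)
  qed
qed

lemma iota_high: "high n (iota y) = (if \<forall>m<n. y m then iota (high n y) else high n y)"
proof -
  have "(\<forall>m'<m + n. y m') \<longleftrightarrow> (\<forall>m'<m. y (m' + n))" if "\<forall>m<n. y m" for m
  proof
    assume H: "\<forall>m'<m + n. y m'" then show "\<forall>m'<m. y (m' + n)" by simp
  next
    assume H: "\<forall>m'<m. y (m' + n)"
    show "\<forall>m'<m + n. y m'"
    proof (intro allI impI)
      fix m' assume mm: "m' < m + n"
      show "y m'"
      proof (cases "m' < n")
        case True then show ?thesis using that by blast
      next
        case False
        then have e1: "m' - n + n = m'" by simp
        have "m' - n < m" using False mm by simp
        then have "y (m' - n + n)" using H by blast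
        then show ?thesis by (simp only: e1)
      qed
    qed
  qed
  moreover have "\<not> (\<forall>m'<m + n. y m')" if "\<not> (\<forall>m<n. y m)" for m
    using that trans_less_add2 by blast
  ultimately show ?thesis by (auto simp: high_def iota_def fun_eq_iff)
qed

lemma iota_inv_all: "(\<forall>m<n. iota_inv y m) \<longleftrightarrow> (\<forall>m<n. \<not> y m)"
proof
  assume A: "\<forall>m<n. iota_inv y m"
  show "\<forall>m<n. \<not> y m"
  proof (intro allI impI)
    fix m assume "m < n"
    then show "\<not> y m"
    proof (induction m rule: less_induct)
      case (less m)
      then have h: "\<forall>m'<m. \<not> y m'" by auto
      have "iota_inv y m" using A less.prems by blast
      then show ?case using h by (simp add: iota_inv_def)
    qed
  qed
next
  assume H: "\<forall>m<n. \<not> y m"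
  show "\<forall>m<n. iota_inv y m"
  proof (intro allI impI)
    fix m assume "m < n"
    then have "\<forall>m'<m. \<not> y m'" "\<not> y m" using H by auto
    then show "iota_inv y m" by (simp add: iota_inv_def)
  qed
qed

lemma iota_all_not: "(\<forall>m<n. \<not> iota y m) \<longleftrightarrow> (\<forall>m<n. y m)"
proof
  assume A: "\<forall>m<n. \<not> iota y m"
  show "\<forall>m<n. y m"
  proof (intro allI impI)
    fix m assume "m < n"
    then show "y m"
    proof (induction m rule: less_induct)
      case (less m)
      then have h: "\<forall>m'<m. y m'" by auto
      have "\<not> iota y m" using A less.prems by blast
      then show ?case using h by (simp add: iota_def)
    qed
  qed
next
  assume H: "\<forall>m<n. y m"
  show "\<forall>m<n. \<not> iota y m"
  proof (intro allI impI)
    fix m assume "m < n"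
    then have "\<forall>m'<m. y m'" "y m" using H by auto
    then show "\<not> iota y m" by (simp add: iota_def)
  qed
qed

lemma iota_iota_inv[simp]: "iota (iota_inv y) = y"
proof (rule ext)
  fix n
  show "iota (iota_inv y) n = y n"
  proof (cases "\<forall>m<n. \<not> y m")
    case True
    then have c: "\<forall>m<n. iota_inv y m" using iota_inv_all by blast
    have "iota_inv y n = (\<not> y n)" unfolding iota_inv_def by (rule if_P[OF True])
    moreover have "iota (iota_inv y) n = (\<not> iota_inv y n)" unfolding iota_def by (rule if_P[OF c])
    ultimately show ?thesis by simp
  next
    case False
    then have c: "\<not> (\<forall>m<n. iota_inv y m)" using iota_inv_all by blast
    have "iota_inv y n = y n" unfolding iota_inv_def by (rule if_not_P[OF False])
    moreover have "iota (iota_inv y) n = iota_inv y n" unfolding iota_def by (rule if_not_P[OF c])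
    ultimately show ?thesis by simp
  qed
qed

lemma iota_inv_iota[simp]: "iota_inv (iota y) = y"
proof (rule ext)
  fix n
  show "iota_inv (iota y) n = y n"
  proof (cases "\<forall>m<n. y m")
    case True
    then have c: "\<forall>m<n. \<not> iota y m" using iota_all_not by blast
    have "iota y n = (\<not> y n)" unfolding iota_def by (rule if_P[OF True])
    moreover have "iota_inv (iota y) n = (\<not> iota y n)" unfolding iota_inv_def by (rule if_P[OF c])
    ultimately show ?thesis by simp
  next
    case False
    then have c: "\<not> (\<forall>m<n. \<not> iota y m)" using iota_all_not by blast
    have "iota y n = y n" unfolding iota_def by (rule if_not_P[OF False])
    moreover have "iota_inv (iota y) n = iota y n" unfolding iota_inv_def by (rule if_not_P[OF c])
    ultimately show ?thesis by simp
  qed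
qed

lemma iota_inj: "iota a = iota b \<Longrightarrow> a = b"
proof -
  assume "iota a = iota b"
  then have "iota_inv (iota a) = iota_inv (iota b)" by simp
  then show "a = b" by simp
qed

lemma iota_pow_0[simp]: "iota_pow 0 y = y" by (simp add: iota_pow_def)

lemma iota_pow_Suc: "iota_pow (i + 1) y = iota (iota_pow i y)"
proof (cases "i \<ge> 0")
  case True
  then have "nat (i+1) = Suc (nat i)" by simp
  then show ?thesis using True by (simp add: iota_pow_def)
next
  case False
  define k where "k = nat (- i - 1)"
  have k: "i = - int (Suc k)" using False by (simp add: k_def)
  have a: "iota_pow (i+1) y = (iota_inv^^k) y"
  proof (cases k)
    case 0 then show ?thesis using k by (simp add: iota_pow_def)
  next
    case (Suc k') then have "nat (- (i+1)) = k" "\<not> i + 1 \<ge> 0" using k by auto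
    then show ?thesis by (simp add: iota_pow_def)
  qed
  have "nat (-i) = Suc k" "\<not> i \<ge> 0" using k by auto
  then have "iota_pow i y = iota_inv ((iota_inv^^k) y)" by (simp add: iota_pow_def)
  then show ?thesis using a by simp
qed

lemma iota_pow_1[simp]: "iota_pow 1 y = iota y"
  using iota_pow_Suc[of 0 y] by simp

lemma iota_pow_pred: "iota_pow (i - 1) y = iota_inv (iota_pow i y)"
  using iota_pow_Suc[of "i - 1" y] by simp

lemma iota_pow_add: "iota_pow (a + b) y = iota_pow a (iota_pow b y)"
proof (induction a rule: int_induct[where k=0])
  case base then show ?case by simp
next
  case (step1 i)
  have "iota_pow (i + 1 + b) y = iota_pow ((i + b) + 1) y" by (simp add: algebra_simps)
  also have "\<dots> = iota (iota_pow (i + b) y)" by (rule iota_pow_Suc)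
  also have "\<dots> = iota (iota_pow i (iota_pow b y))" using step1 by simp
  also have "\<dots> = iota_pow (i + 1) (iota_pow b y)" by (simp only: iota_pow_Suc)
  finally show ?case .
next
  case (step2 i)
  have "iota_pow (i - 1 + b) y = iota_pow ((i + b) - 1) y" by (simp add: algebra_simps)
  also have "\<dots> = iota_inv (iota_pow (i + b) y)" by (rule iota_pow_pred)
  also have "\<dots> = iota_inv (iota_pow i (iota_pow b y))" using step2 by simp
  also have "\<dots> = iota_pow (i - 1) (iota_pow b y)" by (simp only: iota_pow_pred)
  finally show ?case .
qed

lemma iota_pow_nat: "iota_pow (int k) y = (iota ^^ k) y"
  by (simp add: iota_pow_def)

lemma div_helper: "0 \<le> r \<Longrightarrow> r < B \<Longrightarrow> (B * Q + r) div B = (Q::int)"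
  by (subst div_mult_self4) auto

lemma div_plus1: "(0::int) < M \<Longrightarrow> (A+1) div M = A div M + (if A mod M = M - 1 then 1 else 0)"
proof -
  assume M: "0 < M"
  have e: "A + 1 = M * (A div M) + (A mod M + 1)" by simp
  have r: "0 \<le> A mod M" "A mod M < M" using M by auto
  show ?thesis
  proof (cases "A mod M = M - 1")
    case True
    then have e2: "A mod M + 1 = M" by simp
    have e3: "A + 1 = M * (A div M) + M" using e e2 by linarith
    have "(M * (A div M) + M) div M = A div M + 1" using M by simp
    then have "(A + 1) div M = A div M + 1" by (subst e3)
    then show ?thesis using True by simp
  next
    case False
    then have "A mod M + 1 < M" using r by linarith
    then have "(M * (A div M) + (A mod M + 1)) div M = A div M" using r by (intro div_helper) auto
    then have "(A+1) div M = A div M" by (subst e)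
    then show ?thesis using False by simp
  qed
qed

lemma iota_pow_lh: "low n (iota_pow i y) = (low n y + i) mod 2^n \<and>
   high n (iota_pow i y) = iota_pow ((low n y + i) div 2^n) (high n y)"
proof (induction i rule: int_induct[where k=0])
  case base
  have "0 \<le> low n y" "low n y < 2^n" using low_bounds by auto
  then show ?case by (simp add: mod_pos_pos_trivial div_pos_pos_trivial)
next
  case (step1 i)
  define z where "z = iota_pow i y"
  define A where "A = low n y + i"
  have M: "(0::int) < 2^n" by simp
  have z1: "low n z = A mod 2^n" "high n z = iota_pow (A div 2^n) (high n y)"
    using step1 unfolding z_def A_def by blast+
  have iz: "iota_pow (i+1) y = iota z" by (simp add: z_def iota_pow_Suc)
  have lo: "low n (iota z) = (A + 1) mod 2^n"
    by (simp add: iota_low z1 mod_add_left_eq)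
  have hi: "high n (iota z) = iota_pow ((A + 1) div 2^n) (high n y)"
  proof (cases "A mod 2^n = 2^n - 1")
    case True
    then have c: "\<forall>m<n. z m" using low_all[of n z] z1(1) by simp
    have q: "(A+1) div 2^n = A div 2^n + 1" using div_plus1[OF M, of A] True by simp
    have "high n (iota z) = iota (high n z)" unfolding iota_high by (rule if_P[OF c])
    also have "\<dots> = iota (iota_pow (A div 2^n) (high n y))" using z1(2) by simp
    also have "\<dots> = iota_pow (A div 2^n + 1) (high n y)" by (simp only: iota_pow_Suc)
    finally show ?thesis using q by simp
  next
    case False
    then have c: "\<not> (\<forall>m<n. z m)" using low_all[of n z] z1(1) by simp
    have "high n (iota z) = high n z" unfolding iota_high by (rule if_not_P[OF c])
    moreover have q: "(A+1) div 2^n = A div 2^n" using div_plus1[OF M, of A] False by simp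
    ultimately show ?thesis using z1(2) by simp
  qed
  have A1: "A + 1 = low n y + (i + 1)" by (simp add: A_def)
  show ?case using lo hi unfolding iz A1 by blast
next
  case (step2 i)
  define z where "z = iota_pow (i - 1) y"
  define A where "A = low n y + (i - 1)"
  have M: "(0::int) < 2^n" by simp
  have iz: "iota z = iota_pow i y" using iota_pow_Suc[of "i - 1" y] by (simp add: z_def)
  have z1: "low n (iota z) = (A + 1) mod 2^n" "high n (iota z) = iota_pow ((A+1) div 2^n) (high n y)"
  proof -
    have "A + 1 = low n y + i" by (simp add: A_def)
    then show "low n (iota z) = (A + 1) mod 2^n" "high n (iota z) = iota_pow ((A+1) div 2^n) (high n y)"
      using step2 iz by auto
  qed
  have bz: "0 \<le> low n z" "low n z < 2^n" using low_bounds by auto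
  have "low n z = (low n z + 1 - 1) mod 2^n" using bz by (simp add: mod_pos_pos_trivial)
  also have "\<dots> = ((low n z + 1) mod 2^n - 1) mod 2^n" by (simp add: mod_diff_left_eq)
  also have "\<dots> = ((A + 1) mod 2^n - 1) mod 2^n" using z1 by (simp add: iota_low)
  also have "\<dots> = A mod 2^n" by (simp add: mod_diff_left_eq)
  finally have lz: "low n z = A mod 2^n" .
  have "high n z = iota_pow (A div 2^n) (high n y)"
  proof (cases "A mod 2^n = 2^n - 1")
    case True
    then have "(\<forall>m<n. z m) = True" using lz low_all[of n z] by simp
    then have "high n (iota z) = iota (high n z)" by (simp only: iota_high if_True)
    then have "iota (high n z) = iota (iota_pow (A div 2^n) (high n y))"
      using z1 True div_plus1[OF M, of A] by (simp add: iota_pow_Suc)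
    then show ?thesis using iota_inj by blast
  next
    case False
    then have "(\<forall>m<n. z m) = False" using lz low_all[of n z] by simp
    then have "high n (iota z) = high n z" by (simp only: iota_high if_False)
    then show ?thesis using z1 False div_plus1[OF M, of A] by simp
  qed
  then show ?case using lz unfolding z_def A_def by blast
qed

lemma iota_pow_inj: "iota_pow a h = iota_pow b h \<Longrightarrow> a = b"
proof (rule ccontr)
  assume e: "iota_pow a h = iota_pow b h" and ne: "a \<noteq> b"
  define m where "m = nat \<bar>a - b\<bar>"
  have la: "low m (iota_pow a h) = (low m h + a) mod 2^m" using iota_pow_lh by blast
  have lb: "low m (iota_pow b h) = (low m h + b) mod 2^m" using iota_pow_lh by blast
  have "(low m h + a) mod 2^m = low m (iota_pow a h)" by (simp only: la)
  also have "\<dots> = low m (iota_pow b h)" by (simp only: e)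
  also have "\<dots> = (low m h + b) mod 2^m" by (simp only: lb)
  finally have "(low m h + a) mod 2^m = (low m h + b) mod 2^m" .
  then have d: "2^m dvd (a - b)" by (simp add: mod_eq_dvd_iff)
  have "\<bar>(2::int)^m\<bar> \<le> \<bar>a - b\<bar>" using dvd_imp_le_int[OF _ d] ne by simp
  then have c1: "(2::int)^m \<le> \<bar>a - b\<bar>" by simp
  have c2: "int m = \<bar>a - b\<bar>" by (simp add: m_def)
  moreover have "int m < 2^m"
  proof -
    have "m < 2^m" by (rule less_exp)
    then have "int m < int (2^m)" by (simp only: of_nat_less_iff)
    then show ?thesis by simp
  qed
  ultimately show False using c1 c2 by linarith
qed

lemma odo_rel_high: "odo_rel n y i j \<longleftrightarrow> high n (iota_pow i y) = high n (iota_pow j y)"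
proof
  assume o: "odo_rel n y i j"
  show "high n (iota_pow i y) = high n (iota_pow j y)" unfolding high_def
  proof (rule ext)
    fix m
    have "n \<le> m + n" by simp
    then show "iota_pow i y (m + n) = iota_pow j y (m + n)" using o unfolding odo_rel_def by blast
  qed
next
  assume h: "high n (iota_pow i y) = high n (iota_pow j y)"
  show "odo_rel n y i j" unfolding odo_rel_def
  proof (intro allI impI)
    fix m assume nm: "n \<le> m"
    have "iota_pow i y (m - n + n) = iota_pow j y (m - n + n)"
      using fun_cong[OF h, of "m - n"] by (simp only: high_def)
    then show "iota_pow i y m = iota_pow j y m" using nm by simp
  qed
qed

lemma odo_rel_char: "odo_rel n y i j \<longleftrightarrow> (low n y + i) div 2^n = (low n y + j) div 2^n"
proof -
  have hi: "high n (iota_pow i y) = iota_pow ((low n y + i) div 2^n) (high n y)" using iota_pow_lh by blast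
  have hj: "high n (iota_pow j y) = iota_pow ((low n y + j) div 2^n) (high n y)" using iota_pow_lh by blast
  show ?thesis unfolding odo_rel_high hi hj by (auto dest: iota_pow_inj)
qed

lemma odo_tile_refl: "j \<in> odo_tile y n j"
  by (simp add: odo_tile_def odo_rel_def)

lemma odo_tile_eq: "k \<in> odo_tile y n j \<Longrightarrow> odo_tile y n k = odo_tile y n j"
  by (auto simp: odo_tile_def odo_rel_def)

lemma odo_rel_mono: "n \<le> m \<Longrightarrow> odo_rel n h a b \<Longrightarrow> odo_rel m h a b"
  by (auto simp: odo_rel_def)

lemma odo_tile_mono: "n \<le> m \<Longrightarrow> odo_tile y n j \<subseteq> odo_tile y m j"
  by (auto simp: odo_tile_def odo_rel_def)

lemma finite_vec_box:
  assumes "\<And>i. finite (S i)"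
  shows "finite {k :: 'b^'d. \<forall>i. k $ i \<in> S i}"
proof -
  have "{k :: 'b^'d. \<forall>i. k $ i \<in> S i} \<subseteq> (\<lambda>f. vec_lambda f) ` (PiE UNIV S)"
  proof
    fix k :: "'b^'d" assume "k \<in> {k. \<forall>i. k $ i \<in> S i}"
    then have "(\<lambda>i. k $ i) \<in> PiE UNIV S" by auto
    then show "k \<in> (\<lambda>f. vec_lambda f) ` (PiE UNIV S)" by (intro image_eqI[of _ _ "\<lambda>i. k $ i"]) auto
  qed
  moreover have "finite (PiE UNIV S)" using assms by (intro finite_PiE) auto
  ultimately show ?thesis using finite_subset by blast
qed

lemma div_bound_set: "(0::int) < M \<Longrightarrow> {v. (L + v) div M = q} \<subseteq> {M*q - L .. M*q - L + M}"
proof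
  fix v assume M: "0 < M" and "v \<in> {v. (L + v) div M = q}"
  then have q: "(L + v) div M = q" by simp
  have e: "L + v = M * q + (L + v) mod M" using q div_mult_mod_eq[of "L+v" M] by (simp add: mult.commute)
  have "0 \<le> (L+v) mod M" "(L+v) mod M < M" using M by auto
  then show "v \<in> {M*q - L .. M*q - L + M}" using e by auto
qed

lemma odo_tile_finite: "finite (odo_tile y n j)"
proof -
  define S where "S i = {v. (low n (y i) + v) div 2^n = (low n (y i) + j $ i) div 2^n}" for i
  have "odo_tile y n j = {k. \<forall>i. k $ i \<in> S i}"
    by (auto simp: odo_tile_def odo_rel_char S_def)
  moreover have "finite (S i)" for i
    unfolding S_def by (rule finite_subset[OF div_bound_set]) auto
  ultimately show ?thesis using finite_vec_box[of S] by simp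
qed

lemma div_shift_pow: "(X + 2^n) div 2^n = X div 2^n + (1::int)"
  by simp


lemma odo_tile_strict: "odo_tile y n j \<noteq> odo_tile y (Suc n) j"
proof
  assume E: "odo_tile y n j = odo_tile y (Suc n) j"
  define i0 :: 'a where "i0 = undefined"
  define h where "h = y i0"
  define u where "u = j $ i0"
  define s where "s = low (Suc n) h + u"
  define M :: int where "M = 2^n"
  have M2: "(2::int)^Suc n = 2 * M" by (simp add: M_def)
  have Mp: "0 < M" by (simp add: M_def)
  define \<delta> where "\<delta> = (if s mod (2*M) < M then M else - M)"
  define k :: "int^'a" where "k = (\<chi> i. if i = i0 then u + \<delta> else j $ i)"
  have "(s + \<delta>) div (2*M) = s div (2*M)"
  proof -
    have e: "s = (2*M) * (s div (2*M)) + s mod (2*M)" by simp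
    have r: "0 \<le> s mod (2*M)" "s mod (2*M) < 2*M" using Mp by auto
    show ?thesis
    proof (cases "s mod (2*M) < M")
      case True
      then have d: "\<delta> = M" by (simp add: \<delta>_def)
      have e1: "s + \<delta> = (2*M) * (s div (2*M)) + (s mod (2*M) + M)" using e d by linarith
      have "0 \<le> s mod (2*M) + M" "s mod (2*M) + M < 2*M" using True r Mp by linarith+
      then have "((2*M) * (s div (2*M)) + (s mod (2*M) + M)) div (2*M) = s div (2*M)" by (rule div_helper)
      then show ?thesis by (subst e1)
    next
      case False
      then have d: "\<delta> = - M" by (simp add: \<delta>_def)
      have e1: "s + \<delta> = (2*M) * (s div (2*M)) + (s mod (2*M) - M)" using e d by linarith
      have "0 \<le> s mod (2*M) - M" "s mod (2*M) - M < 2*M" using False r Mp by linarith+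
      then have "((2*M) * (s div (2*M)) + (s mod (2*M) - M)) div (2*M) = s div (2*M)" by (rule div_helper)
      then show ?thesis by (subst e1)
    qed
  qed
  then have "k \<in> odo_tile y (Suc n) j"
    unfolding odo_tile_def using odo_rel_char[of "Suc n"] M2
    by (auto simp: k_def odo_rel_def h_def s_def u_def add.assoc)
  moreover have "k \<notin> odo_tile y n j"
  proof -
    have "(low n h + (u + \<delta>)) div M \<noteq> (low n h + u) div M"
    proof (cases "s mod (2*M) < M")
      case True
      then have "(low n h + (u + \<delta>)) div M = (low n h + u) div M + 1"
        using Mp by (simp add: \<delta>_def add.assoc[symmetric])
      then show ?thesis by simp
    next
      case False
      have d: "\<delta> = - M" using False by (simp add: \<delta>_def)
      have eqx: "low n h + u = (low n h + (u + \<delta>)) + M" using d by simp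
      have Mne: "M \<noteq> 0" using Mp by simp
      have "(low n h + u) div M = (low n h + (u + \<delta>)) div M + 1"
        by (simp only: eqx div_add_self2[OF Mne])
      then have "(low n h + (u + \<delta>)) div M + 1 = (low n h + u) div M" by simp
      then show ?thesis by linarith
    qed
    then show ?thesis unfolding odo_tile_def odo_rel_char
      by (auto simp: k_def h_def u_def M_def)
  qed
  ultimately show False using E by simp
qed

lemma odo_tile_inj: "odo_tile y n j = odo_tile y m j \<Longrightarrow> n = m"
proof (rule ccontr)
  assume E: "odo_tile y n j = odo_tile y m j" and "n \<noteq> m"
  then consider "n < m" | "m < n" by linarith
  then show False
  proof cases
    case 1
    then have "odo_tile y (Suc n) j \<subseteq> odo_tile y n j" using E odo_tile_mono[of "Suc n" m y j] by simp
    then show False using odo_tile_mono[of n "Suc n" y j] odo_tile_strict[of y n j] by auto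
  next
    case 2
    then have "odo_tile y (Suc m) j \<subseteq> odo_tile y m j" using E odo_tile_mono[of "Suc m" n y j] by simp
    then show False using odo_tile_mono[of m "Suc m" y j] odo_tile_strict[of y m j] by auto
  qed
qed

lemma odo_rel_iota_pow: "odo_rel n (iota_pow b h) u v \<longleftrightarrow> odo_rel n h (u + b) (v + b)"
  by (simp add: odo_rel_def iota_pow_add[symmetric])

lemma odo_tile_TY: "odo_tile (TY a y) n k = (\<lambda>k. k - a) ` odo_tile y n (k + a)"
proof -
  have "k' \<in> odo_tile (TY a y) n k \<longleftrightarrow> k' + a \<in> odo_tile y n (k + a)" for k'
    by (simp add: odo_tile_def TY_def odo_rel_iota_pow)
  moreover have "k' \<in> (\<lambda>k. k - a) ` S \<longleftrightarrow> k' + a \<in> S" for k' S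
  proof
    assume "k' + a \<in> S" then show "k' \<in> (\<lambda>k. k - a) ` S" by (rule image_eqI[where x="k'+a", rotated]) simp
  next
    assume "k' \<in> (\<lambda>k. k - a) ` S" then obtain x where "x \<in> S" "k' = x - a" by auto
    then show "k' + a \<in> S" by simp
  qed
  ultimately show ?thesis by blast
qed

definition nonint :: "(nat \<Rightarrow> bool) \<Rightarrow> bool" where
  "nonint h \<longleftrightarrow> (\<forall>N. \<exists>m\<ge>N. h m) \<and> (\<forall>N. \<exists>m\<ge>N. \<not> h m)"

lemma switch01: "\<not> h a \<Longrightarrow> h b \<Longrightarrow> a < b \<Longrightarrow> \<exists>m. a \<le> m \<and> \<not> h m \<and> h (Suc m)"
proof (induction b)
  case 0 then show ?case by simp
next
  case (Suc b)
  show ?case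
  proof (cases "h b")
    case True
    then have "a < b" using Suc.prems by (cases "a = b") auto
    then show ?thesis using Suc True by auto
  next
    case False
    then show ?thesis using Suc.prems less_Suc_eq_le by blast
  qed
qed

lemma nonint_big:
  assumes "nonint h"
  shows "\<exists>n. \<forall>a b. \<bar>a\<bar> \<le> R \<and> \<bar>b\<bar> \<le> R \<longrightarrow> odo_rel n h a b"
proof -
  obtain a where a: "a \<ge> nat R" "\<not> h a" using assms by (auto simp: nonint_def)
  obtain b where b: "b \<ge> Suc a" "h b" using assms by (auto simp: nonint_def)
  obtain m where m: "a \<le> m" "\<not> h m" "h (Suc m)" using switch01[of h a b] a b by auto
  have Rm: "R \<le> 2^m"
  proof -
    have "m < 2^m" by (rule less_exp)
    then have "int m < int (2^m)" by (simp only: of_nat_less_iff)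
    then have "int m < 2^m" by simp
    then show ?thesis using a m by linarith
  qed
  have L: "low (Suc (Suc m)) h = low m h + 2^Suc m" using m by (simp add: low_Suc)
  have bm: "0 \<le> low m h" "low m h < 2^m" using low_bounds by auto
  have z: "(low (Suc (Suc m)) h + v) div 2^Suc (Suc m) = 0" if "\<bar>v\<bar> \<le> R" for v
  proof -
    have "(2::int)^Suc (Suc m) = 4 * 2^m" by simp
    then show ?thesis using L bm Rm that by (intro div_pos_pos_trivial) auto
  qed
  have "odo_rel (Suc (Suc m)) h a b" if "\<bar>a\<bar> \<le> R" "\<bar>b\<bar> \<le> R" for a b
    unfolding odo_rel_char by (simp only: z[OF that(1)] z[OF that(2)])
  then show ?thesis by blast
qed

lemma exhaust:
  fixes y :: "'d::finite \<Rightarrow> nat \<Rightarrow> bool"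
  assumes "\<forall>i. nonint (y i)" "finite F"
  shows "\<exists>n. F \<subseteq> odo_tile y n j"
proof -
  define R where "R = (\<Sum>k\<in>insert j F. \<Sum>i\<in>UNIV. \<bar>k $ i\<bar>)"
  have Rb: "\<bar>k $ i\<bar> \<le> R" if "k \<in> insert j F" for k i
  proof -
    have "\<bar>k $ i\<bar> \<le> (\<Sum>i\<in>UNIV. \<bar>k $ i\<bar>)" by (rule member_le_sum) auto
    also have "\<dots> \<le> R" unfolding R_def using that assms(2)
      by (intro member_le_sum) (auto intro: sum_nonneg)
    finally show ?thesis .
  qed
  have "\<forall>i. \<exists>n. \<forall>a b. \<bar>a\<bar> \<le> R \<and> \<bar>b\<bar> \<le> R \<longrightarrow> odo_rel n (y i) a b"
    using nonint_big assms(1) by blast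
  from choice[OF this] obtain nf where nf0: "\<forall>i a b. \<bar>a\<bar> \<le> R \<and> \<bar>b\<bar> \<le> R \<longrightarrow> odo_rel (nf i) (y i) a b"
    by blast
  then have nf: "\<And>i a b. \<bar>a\<bar> \<le> R \<Longrightarrow> \<bar>b\<bar> \<le> R \<Longrightarrow> odo_rel (nf i) (y i) a b"
    by blast
  define n where "n = Max (range nf)"
  have "nf i \<le> n" for i unfolding n_def by (rule Max_ge) auto
  then have "odo_rel n (y i) a b" if "\<bar>a\<bar> \<le> R" "\<bar>b\<bar> \<le> R" for i a b
    using nf[OF that] odo_rel_mono by blast
  then show ?thesis using Rb by (auto simp: odo_tile_def intro!: exI[of _ n])
qed

definition G :: "(int^'d \<Rightarrow> 'a) set \<Rightarrow> (int^'d \<Rightarrow> 'a) \<times> ('d \<Rightarrow> nat \<Rightarrow> bool) \<Rightarrow> int^'d \<Rightarrow> nat \<Rightarrow> bool"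
  where "G X0 p j n \<longleftrightarrow> \<not> in_language X0 (fst p) (odo_tile (snd p) (Suc n) j)"

definition NN where "NN X0 p j = (LEAST n. G X0 p j n)"

definition TT where
  "TT X0 p j = (if \<exists>n. G X0 p j n then odo_tile (snd p) (NN X0 p j) j else {j})"

definition tau where "tau X0 p = range (TT X0 p)"

lemma in_language_mono: "S \<subseteq> S' \<Longrightarrow> in_language X0 x S' \<Longrightarrow> in_language X0 x S"
  unfolding in_language_def by blast

lemma G_mono: "G X0 p j n \<Longrightarrow> n \<le> m \<Longrightarrow> G X0 p j m"
proof -
  assume g: "G X0 p j n" and nm: "n \<le> m"
  have "odo_tile (snd p) (Suc n) j \<subseteq> odo_tile (snd p) (Suc m) j" using nm by (intro odo_tile_mono) simp
  then show ?thesis using g in_language_mono unfolding G_def by blast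
qed

lemma NN_G: "\<exists>n. G X0 p j n \<Longrightarrow> G X0 p j (NN X0 p j)"
  unfolding NN_def by (rule LeastI_ex)

lemma NN_pred: "\<exists>n. G X0 p j n \<Longrightarrow> NN X0 p j = Suc n' \<Longrightarrow> in_language X0 (fst p) (odo_tile (snd p) (NN X0 p j) j)"
proof -
  assume e: "NN X0 p j = Suc n'"
  have "\<not> G X0 p j n'" using not_less_Least[of n' "G X0 p j"] e unfolding NN_def by simp
  then show ?thesis using e unfolding G_def by simp
qed

lemma TT_self: "j \<in> TT X0 p j"
  by (simp add: TT_def odo_tile_refl)

lemma TT_key:
  assumes ex: "\<exists>n. G X0 p j n" and k: "k \<in> TT X0 p j"
  shows "(\<exists>n. G X0 p k n) \<and> NN X0 p k = NN X0 p j \<and> TT X0 p k = TT X0 p j"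
proof -
  define n0 where "n0 = NN X0 p j"
  define y where "y = snd p"
  have kt: "k \<in> odo_tile y n0 j" using k ex by (simp add: TT_def n0_def y_def)
  have same: "odo_tile y m k = odo_tile y m j" if "n0 \<le> m" for m
    using odo_tile_eq odo_tile_mono[OF that] kt by blast
  have Gk: "G X0 p k n0" using NN_G[OF ex] same[of "Suc n0"] by (simp add: G_def n0_def y_def)
  then have exk: "\<exists>n. G X0 p k n" by blast
  have le: "NN X0 p k \<le> n0" using Gk unfolding NN_def by (rule Least_le)
  have eq: "NN X0 p k = n0"
  proof (rule ccontr)
    assume "NN X0 p k \<noteq> n0"
    then have lt: "Suc (NN X0 p k) \<le> n0" using le by simp
    then obtain n' where n': "n0 = Suc n'" using Suc_le_D by blast
    have "in_language X0 (fst p) (odo_tile y n0 j)"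
      using NN_pred[OF ex, of n'] n' by (simp add: n0_def y_def)
    moreover have "odo_tile y (Suc (NN X0 p k)) k \<subseteq> odo_tile y n0 j"
      using odo_tile_mono[OF lt, of y k] same[of n0] by simp
    ultimately have "in_language X0 (fst p) (odo_tile y (Suc (NN X0 p k)) k)"
      using in_language_mono by blast
    then show False using NN_G[OF exk] by (simp add: G_def y_def)
  qed
  have "TT X0 p k = TT X0 p j" using exk ex eq same[of n0]
    by (simp add: TT_def n0_def y_def)
  then show ?thesis using exk eq by (simp add: n0_def)
qed

lemma TT_eq: "k \<in> TT X0 p j \<Longrightarrow> TT X0 p k = TT X0 p j"
proof (cases "\<exists>n. G X0 p j n")
  case True
  assume "k \<in> TT X0 p j" then show ?thesis using TT_key[OF True] by blast
next
  case False
  assume "k \<in> TT X0 p j" then have "k = j" using False by (simp add: TT_def)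
  then show ?thesis by simp
qed

lemma TT_finite: "finite (TT X0 p j)"
  by (simp add: TT_def odo_tile_finite)

lemma tau_tiling: "is_tiling (tau X0 p)"
  unfolding is_tiling_def tau_def
proof (intro conjI)
  show "\<forall>S\<in>range (TT X0 p). finite S \<and> S \<noteq> {}" using TT_finite TT_self by blast
  show "\<forall>S\<in>range (TT X0 p). \<forall>S'\<in>range (TT X0 p). S \<noteq> S' \<longrightarrow> S \<inter> S' = {}"
  proof (intro ballI impI)
    fix S S' assume "S \<in> range (TT X0 p)" "S' \<in> range (TT X0 p)" "S \<noteq> S'"
    then obtain a b where ab: "S = TT X0 p a" "S' = TT X0 p b" "S \<noteq> S'" by auto
    show "S \<inter> S' = {}"
    proof (rule ccontr)
      assume "S \<inter> S' \<noteq> {}"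
      then obtain c where "c \<in> TT X0 p a" "c \<in> TT X0 p b" using ab by auto
      then have "TT X0 p a = TT X0 p b" using TT_eq[of c X0 p a] TT_eq[of c X0 p b] by simp
      then show False using ab by simp
    qed
  qed
  show "\<Union> (range (TT X0 p)) = UNIV" using TT_self by blast
qed

lemma tile_tau: "tile (tau X0 p) j = TT X0 p j"
  unfolding tile_def tau_def
proof (rule the_equality)
  show "TT X0 p j \<in> range (TT X0 p) \<and> j \<in> TT X0 p j" using TT_self by blast
  fix S assume "S \<in> range (TT X0 p) \<and> j \<in> S"
  then show "S = TT X0 p j" using TT_eq by blast
qed

lemma in_language_shift:
  "in_language X0 (shift a x) ((\<lambda>k. k - a) ` S) \<longleftrightarrow> in_language X0 x S"
proof
  assume "in_language X0 (shift a x) ((\<lambda>k. k - a) ` S)"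
  then obtain z v where z: "z \<in> X0" "\<forall>s\<in>S. z (s - a + v) = shift a x (s - a)"
    unfolding in_language_def by auto
  then have "\<forall>s\<in>S. z (s + (v - a)) = x s"
    by (auto simp: shift_def algebra_simps)
  then show "in_language X0 x S" using z(1) unfolding in_language_def by blast
next
  assume "in_language X0 x S"
  then obtain z v where z: "z \<in> X0" "\<forall>s\<in>S. z (s + v) = x s"
    unfolding in_language_def by auto
  then have "\<forall>s\<in>(\<lambda>k. k - a) ` S. z (s + (v + a)) = shift a x s"
    by (auto simp: shift_def algebra_simps)
  then show "in_language X0 (shift a x) ((\<lambda>k. k - a) ` S)" using z(1) unfolding in_language_def by blast
qed

lemma G_Tprod: "G X0 (Tprod a p) k n \<longleftrightarrow> G X0 p (k + a) n"
  by (simp add: G_def Tprod_def odo_tile_TY in_language_shift)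

lemma TT_Tprod: "TT X0 (Tprod a p) k = (\<lambda>k. k - a) ` TT X0 p (k + a)"
proof -
  have NN: "NN X0 (Tprod a p) k = NN X0 p (k + a)" by (simp add: NN_def G_Tprod)
  have ex: "(\<exists>n. G X0 (Tprod a p) k n) \<longleftrightarrow> (\<exists>n. G X0 p (k + a) n)" by (simp add: G_Tprod)
  have sn: "snd (Tprod a p) = TY a (snd p)" by (simp add: Tprod_def)
  show ?thesis
  proof (cases "\<exists>n. G X0 p (k + a) n")
    case True
    then have T': "\<exists>n. G X0 (Tprod a p) k n" using ex by blast
    have "TT X0 (Tprod a p) k = odo_tile (snd (Tprod a p)) (NN X0 (Tprod a p) k) k"
      unfolding TT_def by (rule if_P[OF T'])
    also have "\<dots> = odo_tile (TY a (snd p)) (NN X0 p (k + a)) k" by (simp only: sn NN)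
    also have "\<dots> = (\<lambda>k. k - a) ` odo_tile (snd p) (NN X0 p (k + a)) (k + a)" by (rule odo_tile_TY)
    finally have t: "TT X0 (Tprod a p) k = (\<lambda>k. k - a) ` odo_tile (snd p) (NN X0 p (k + a)) (k + a)" .
    have "odo_tile (snd p) (NN X0 p (k + a)) (k + a) = TT X0 p (k + a)"
      unfolding TT_def by (rule if_P[OF True, symmetric])
    then show ?thesis using t by simp
  next
    case False
    then have F': "\<not> (\<exists>n. G X0 (Tprod a p) k n)" using ex by blast
    have "TT X0 (Tprod a p) k = {k}" unfolding TT_def by (rule if_not_P[OF F'])
    moreover have "TT X0 p (k + a) = {k + a}" unfolding TT_def by (rule if_not_P[OF False])
    ultimately show ?thesis by simp
  qed
qed

lemma tau_Tprod: "tau X0 (Tprod a p) = Tr a (tau X0 p)"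
proof -
  define f where "f = (\<lambda>j. (\<lambda>k. k - a) ` TT X0 p j)"
  have t1: "Tr a (tau X0 p) = range f"
    unfolding f_def by (simp add: Tr_def tau_def image_image)
  have r: "range (\<lambda>k. k + a) = UNIV" by (rule surjI[of _ "\<lambda>k. k - a"]) simp
  have "range (\<lambda>k. f (k + a)) = f ` range (\<lambda>k. k + a)" by (simp only: image_image)
  then have t2: "range (\<lambda>k. f (k + a)) = range f" by (simp only: r)
  have "TT X0 (Tprod a p) = (\<lambda>k. f (k + a))" unfolding f_def by (rule ext) (rule TT_Tprod)
  then have "tau X0 (Tprod a p) = range (\<lambda>k. f (k + a))" by (simp only: tau_def)
  then show ?thesis using t1 t2 by simp
qed

lemma tau_equivariant: "equivariant_tiling Tprod (tau X0)"
  unfolding equivariant_tiling_def using tau_tiling tau_Tprod by blast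

lemma good_props:
  assumes ex: "\<forall>j. \<exists>n. G X0 p j n"
  shows "(\<forall>j. \<exists>n. tile (tau X0 p) j = odo_tile (snd p) n j) \<and>
    (\<forall>j n. tile (tau X0 p) j = odo_tile (snd p) n j \<and> n > 0
        \<longrightarrow> in_language X0 (fst p) (tile (tau X0 p) j)) \<and>
    (\<forall>j n. tile (tau X0 p) j = odo_tile (snd p) n j
        \<longrightarrow> \<not> in_language X0 (fst p) (odo_tile (snd p) (Suc n) j))"
proof -
  have t: "tile (tau X0 p) j = odo_tile (snd p) (NN X0 p j) j" for j
    using ex by (simp add: tile_tau TT_def)
  have i: "n = NN X0 p j" if h: "tile (tau X0 p) j = odo_tile (snd p) n j" for j n
  proof -
    have "odo_tile (snd p) n j = odo_tile (snd p) (NN X0 p j) j" by (rule trans[OF sym[OF h] t[of j]])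
    then show "n = NN X0 p j" by (rule odo_tile_inj)
  qed
  show ?thesis
  proof (intro conjI allI impI)
    fix j show "\<exists>n. tile (tau X0 p) j = odo_tile (snd p) n j" using t by blast
  next
    fix j n assume a: "tile (tau X0 p) j = odo_tile (snd p) n j \<and> 0 < n"
    then have n: "n = NN X0 p j" using i by blast
    then obtain n' where "NN X0 p j = Suc n'" using a gr0_implies_Suc by blast
    moreover have "\<exists>n. G X0 p j n" using ex by blast
    ultimately have "in_language X0 (fst p) (odo_tile (snd p) (NN X0 p j) j)"
      using NN_pred by blast
    then show "in_language X0 (fst p) (tile (tau X0 p) j)" unfolding t .
  next
    fix j n assume a: "tile (tau X0 p) j = odo_tile (snd p) n j"
    then have n: "n = NN X0 p j" using i by blast
    have "G X0 p j (NN X0 p j)" using ex NN_G by blast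
    then show "\<not> in_language X0 (fst p) (odo_tile (snd p) (Suc n) j)"
      unfolding G_def n .
  qed
qed

lemma shift_topspace: "topspace shift_topology = UNIV"
  by (simp add: shift_topology_def)

lemma not_in_X0_window:
  assumes ss: "subshift X0" and x: "x \<notin> X0"
  shows "\<exists>F. finite F \<and> \<not> in_language X0 x F"
proof -
  have "openin shift_topology (UNIV - X0)"
    using ss unfolding subshift_def closedin_def shift_topspace by simp
  then have "\<exists>U. finite {i \<in> UNIV. U i \<noteq> topspace (discrete_topology UNIV)} \<and>
      (\<forall>i\<in>UNIV. openin (discrete_topology UNIV) (U i)) \<and> x \<in> PiE UNIV U \<and> PiE UNIV U \<subseteq> UNIV - X0"
    using x unfolding shift_topology_def openin_product_topology_alt by blast
  then obtain U where U: "finite {i. U i \<noteq> UNIV}" "x \<in> PiE UNIV U" "PiE UNIV U \<subseteq> UNIV - X0"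
    by auto
  define F where "F = {i. U i \<noteq> UNIV}"
  have "\<not> in_language X0 x F"
  proof
    assume "in_language X0 x F"
    then obtain z v where z: "z \<in> X0" "\<forall>s\<in>F. z (s + v) = x s" unfolding in_language_def by auto
    have "shift v z \<in> X0" using ss z(1) unfolding subshift_def by blast
    moreover have "shift v z \<in> PiE UNIV U"
    proof -
      have "shift v z i \<in> U i" for i
      proof (cases "i \<in> F")
        case True then show ?thesis using z(2) U(2) by (auto simp: shift_def add.commute)
      next
        case False then show ?thesis by (simp add: F_def)
      qed
      then show ?thesis by auto
    qed
    ultimately show False using U(3) by blast
  qed
  then show ?thesis using U(1) F_def by blast
qed

lemma good_exists:
  assumes ss: "subshift X0" and x: "fst p \<notin> X0" and ni: "\<forall>i. nonint (snd p i)"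
  shows "\<forall>j. \<exists>n. G X0 p j n"
proof
  fix j
  obtain F where F: "finite F" "\<not> in_language X0 (fst p) F" using not_in_X0_window[OF ss x] by blast
  obtain n where n: "F \<subseteq> odo_tile (snd p) n j" using exhaust[OF ni F(1)] by blast
  have "F \<subseteq> odo_tile (snd p) (Suc n) j" using n odo_tile_mono[of n "Suc n"] by auto
  then show "\<exists>n. G X0 p j n" using F(2) in_language_mono unfolding G_def by blast
qed

lemma space_MY: "space MY = UNIV"
  by (simp add: MY_def space_PiM)

lemma space_MX: "space MX = UNIV"
  by (simp add: MX_def space_PiM)

lemma meas_coord: "(\<lambda>y. y i n) \<in> (MY :: ('d \<Rightarrow> nat \<Rightarrow> bool) measure) \<rightarrow>\<^sub>M count_space UNIV"
proof -
  have "(\<lambda>y::'d \<Rightarrow> nat \<Rightarrow> bool. y i) \<in> MY \<rightarrow>\<^sub>M PiM UNIV (\<lambda>_. count_space UNIV)"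
    unfolding MY_def by (rule measurable_component_singleton) simp
  moreover have "(\<lambda>f::nat \<Rightarrow> bool. f n) \<in> PiM UNIV (\<lambda>_. count_space UNIV) \<rightarrow>\<^sub>M count_space UNIV"
    by (rule measurable_component_singleton) simp
  ultimately show ?thesis by (rule measurable_compose)
qed

lemma high_set_sets: "{y :: 'd \<Rightarrow> nat \<Rightarrow> bool. high N (y i) = w} \<in> sets MY"
proof -
  have "Measurable.pred MY (\<lambda>y :: 'd \<Rightarrow> nat \<Rightarrow> bool. \<forall>m. y i (m + N) = w m)"
    by (intro pred_intros_countable pred_count_space_const1 meas_coord)
  moreover have "{y :: 'd \<Rightarrow> nat \<Rightarrow> bool. high N (y i) = w} = {y \<in> space MY. \<forall>m. y i (m + N) = w m}"
    by (auto simp: space_MY high_def fun_eq_iff)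
  ultimately show ?thesis by (simp add: pred_def)
qed

lemma high_shift: "high N (iota_pow (2^N) h) = iota (high N h)"
proof -
  have "0 \<le> low N h" "low N h < 2^N" using low_bounds by auto
  then have "(low N h + 2^N) div 2^N = 1" by simp
  then show ?thesis using iota_pow_lh[of N "2^N" h] by simp
qed

lemma iota_const_True: "iota (\<lambda>_. True) = (\<lambda>_. False)"
  by (simp add: iota_def fun_eq_iff)

lemma iota_funpow_inj: "(iota ^^ k) w = (iota ^^ k') w \<Longrightarrow> k = k'"
  using iota_pow_inj[of "int k" w "int k'"] by (simp add: iota_pow_nat)

lemma TY_coord: "TY (\<chi> i'. if i' = i then 2^N else 0) y i = iota_pow (2^N) (y i)"
  by (simp add: TY_def)

lemma nu_null:
  fixes \<nu> :: "('d::finite \<Rightarrow> nat \<Rightarrow> bool) measure"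
  assumes sets: "sets \<nu> = sets MY" and P: "prob_space \<nu>" and inv: "invariant_meas \<nu> TY"
  shows "AE y in \<nu>. high N (y i) \<noteq> (\<lambda>_. c)"
proof -
  interpret prob_space \<nu> by (rule P)
  have sp: "space \<nu> = UNIV" using sets_eq_imp_space_eq[OF sets] space_MY by simp
  define a :: "int^'d" where "a = (\<chi> i'. if i' = i then 2^N else 0)"
  define w0 :: "nat \<Rightarrow> bool" where "w0 = (\<lambda>_. False)"
  define D where "D k = {y :: 'd \<Rightarrow> nat \<Rightarrow> bool. high N (y i) = (iota ^^ k) w0}" for k
  have Ds: "D k \<in> sets \<nu>" for k unfolding D_def sets by (rule high_set_sets)
  have pre: "TY a -` A \<inter> space \<nu> = {y. high N (iota_pow (2^N) (y i)) \<in> B}"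
    if "A = {y. high N (y i) \<in> B}" for A B
    using that by (auto simp: sp a_def TY_coord)
  have em: "emeasure \<nu> (TY a -` A \<inter> space \<nu>) = emeasure \<nu> A" if "A \<in> sets \<nu>" for A
    using inv that unfolding invariant_meas_def by blast
  have step: "emeasure \<nu> (D k) = emeasure \<nu> (D (Suc k))" for k
  proof -
    have "TY a -` D (Suc k) \<inter> space \<nu> = {y. high N (iota_pow (2^N) (y i)) \<in> {(iota ^^ Suc k) w0}}"
      by (rule pre) (auto simp: D_def)
    also have "\<dots> = D k" by (auto simp: high_shift D_def dest: iota_inj)
    finally show ?thesis using em[OF Ds[of "Suc k"]] by simp
  qed
  have all: "emeasure \<nu> (D k) = emeasure \<nu> (D 0)" for k
  proof (induction k)
    case 0 show ?case by (rule refl)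
  next
    case (Suc k) show ?case using step[of k] Suc.IH by (rule trans[OF sym])
  qed
  have mall: "measure \<nu> (D k) = measure \<nu> (D 0)" for k
    unfolding measure_def by (rule arg_cong[OF all])
  have disj: "disjoint_family D"
    unfolding disjoint_family_on_def
  proof (intro ballI impI)
    fix m n :: nat assume mn: "m \<noteq> n"
    show "D m \<inter> D n = {}"
    proof (rule ccontr)
      assume "D m \<inter> D n \<noteq> {}"
      then obtain y where "y \<in> D m" "y \<in> D n" by blast
      then have "(iota^^m) w0 = (iota^^n) w0" by (simp add: D_def)
      then show False using iota_funpow_inj mn by blast
    qed
  qed
  have "measure \<nu> (D 0) = 0"
  proof (rule ccontr)
    assume ne: "measure \<nu> (D 0) \<noteq> 0"
    then have pos: "measure \<nu> (D 0) > 0" by (simp add: order_less_le)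
    obtain K :: nat where K: "K > 1 / measure \<nu> (D 0)" using reals_Archimedean2 by blast
    have fin: "finite {..<K}" by simp
    have sub: "D ` {..<K} \<subseteq> sets \<nu>" using Ds by blast
    have dj: "disjoint_family_on D {..<K}" by (rule disjoint_family_on_mono[OF subset_UNIV disj])
    have "measure \<nu> (\<Union>k\<in>{..<K}. D k) = (\<Sum>k\<in>{..<K}. measure \<nu> (D k))"
      by (rule finite_measure_finite_Union[OF fin sub dj])
    also have "\<dots> = (\<Sum>k\<in>{..<K}. measure \<nu> (D 0))" by (rule sum.cong[OF refl]) (rule mall)
    also have "\<dots> = K * measure \<nu> (D 0)" by simp
    finally have s: "measure \<nu> (\<Union>k\<in>{..<K}. D k) = K * measure \<nu> (D 0)" .
    have "K * measure \<nu> (D 0) \<le> 1" using prob_le_1[of "\<Union>k\<in>{..<K}. D k"] s by simp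
    moreover have "K * measure \<nu> (D 0) > 1"
    proof -
      have "1 / measure \<nu> (D 0) * measure \<nu> (D 0) < K * measure \<nu> (D 0)"
        by (rule mult_strict_right_mono[OF K pos])
      then show ?thesis using pos by simp
    qed
    ultimately show False by simp
  qed
  then have D0: "emeasure \<nu> (D 0) = 0" by (simp add: emeasure_eq_measure)
  define E where "E = {y :: 'd \<Rightarrow> nat \<Rightarrow> bool. high N (y i) = (\<lambda>_. c)}"
  have Es: "E \<in> sets \<nu>" unfolding E_def sets by (rule high_set_sets)
  have E0: "emeasure \<nu> E = 0"
  proof (cases c)
    case False
    then have "E = D 0" by (simp add: E_def D_def w0_def)
    then show ?thesis using D0 by simp
  next
    case True
    have "TY a -` D 0 \<inter> space \<nu> = {y. high N (iota_pow (2^N) (y i)) \<in> {w0}}"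
      by (rule pre) (auto simp: D_def)
    also have "\<dots> = E"
    proof -
      have "high N (iota_pow (2^N) h) \<in> {w0} \<longleftrightarrow> high N h = (\<lambda>_. c)" for h
      proof -
        have "iota (high N h) = (\<lambda>_. False) \<longleftrightarrow> high N h = (\<lambda>_. True)"
        proof
          assume "iota (high N h) = (\<lambda>_. False)"
          then have "iota (high N h) = iota (\<lambda>_. True)" by (simp only: iota_const_True)
          then show "high N h = (\<lambda>_. True)" by (rule iota_inj)
        next
          assume "high N h = (\<lambda>_. True)"
          then show "iota (high N h) = (\<lambda>_. False)" by (simp only: iota_const_True)
        qed
        moreover have "high N (iota_pow (2^N) h) \<in> {w0} \<longleftrightarrow> iota (high N h) = (\<lambda>_. False)"
          by (simp only: high_shift w0_def singleton_iff)
        ultimately show ?thesis using True by simp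
      qed
      then show ?thesis unfolding E_def by blast
    qed
    finally show ?thesis using em[OF Ds[of 0]] D0 by simp
  qed
  show ?thesis
    by (rule AE_I'[of E]) (use Es E0 in \<open>auto simp: E_def\<close>)
qed

lemma nu_nonint:
  fixes \<nu> :: "('d::finite \<Rightarrow> nat \<Rightarrow> bool) measure"
  assumes sets: "sets \<nu> = sets MY" and P: "prob_space \<nu>" and inv: "invariant_meas \<nu> TY"
  shows "AE y in \<nu>. \<forall>i. nonint (y i)"
proof -
  have "AE y in \<nu>. \<forall>i N c. high N (y i) \<noteq> (\<lambda>_. c)"
    using nu_null[OF assms] by (simp add: AE_all_countable)
  then show ?thesis
  proof (rule AE_mp, intro AE_I2 impI allI)
    fix y :: "'d \<Rightarrow> nat \<Rightarrow> bool" and i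
    assume H: "\<forall>i N c. high N (y i) \<noteq> (\<lambda>_. c)"
    show "nonint (y i)" unfolding nonint_def
    proof (intro conjI allI)
      fix N show "\<exists>m\<ge>N. y i m"
      proof (rule ccontr)
        assume "\<not> (\<exists>m\<ge>N. y i m)"
        then have "high N (y i) = (\<lambda>_. False)" by (auto simp: high_def fun_eq_iff)
        then show False using H by blast
      qed
    next
      fix N show "\<exists>m\<ge>N. \<not> y i m"
      proof (rule ccontr)
        assume "\<not> (\<exists>m\<ge>N. \<not> y i m)"
        then have "high N (y i) = (\<lambda>_. True)" by (auto simp: high_def fun_eq_iff)
        then show False using H by blast
      qed
    qed
  qed
qed

theorem lemma3p4:
  fixes X0 :: "(int^'d \<Rightarrow> 'a::finite) set"
    and \<mu> :: "(int^'d \<Rightarrow> 'a) measure"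
    and \<nu> :: "('d \<Rightarrow> nat \<Rightarrow> bool) measure"
    and \<mu>bar :: "((int^'d \<Rightarrow> 'a) \<times> ('d \<Rightarrow> nat \<Rightarrow> bool)) measure"
  assumes "subshift X0" and "X0 \<noteq> UNIV"
    and "sets \<mu> = sets MX" and "ergodic_meas \<mu> shift"
    and "emeasure \<mu> (UNIV - X0) = 1"
    and "sets \<nu> = sets MY" and "prob_space \<nu>" and "invariant_meas \<nu> TY"
    and "sets \<mu>bar = sets (MX \<Otimes>\<^sub>M MY)" and "ergodic_meas \<mu>bar Tprod"
    and "distr \<mu>bar MX fst = \<mu>" and "distr \<mu>bar MY snd = \<nu>"
  shows "\<exists>\<tau>. equivariant_tiling Tprod \<tau> \<and>
    (AE p in \<mu>bar. \<forall>j. \<exists>n. tile (\<tau> p) j = odo_tile (snd p) n j) \<and>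
    (AE p in \<mu>bar. \<forall>j n. tile (\<tau> p) j = odo_tile (snd p) n j \<and> n > 0
        \<longrightarrow> in_language X0 (fst p) (tile (\<tau> p) j)) \<and>
    (AE p in \<mu>bar. \<forall>j n. tile (\<tau> p) j = odo_tile (snd p) n j
        \<longrightarrow> \<not> in_language X0 (fst p) (odo_tile (snd p) (Suc n) j))"
proof -
  have fstm: "fst \<in> \<mu>bar \<rightarrow>\<^sub>M MX"
    unfolding measurable_cong_sets[OF assms(9) refl] by (rule measurable_fst)
  have sndm: "snd \<in> \<mu>bar \<rightarrow>\<^sub>M MY"
    unfolding measurable_cong_sets[OF assms(9) refl] by (rule measurable_snd)
  have P: "prob_space \<mu>" using assms(4) by (simp add: ergodic_meas_def)
  have Us: "UNIV - X0 \<in> sets \<mu>" using emeasure_notin_sets assms(5) by force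
  have "prob_space.prob \<mu> (UNIV - X0) = 1" using assms(5) by (simp add: measure_def)
  then have "AE x in \<mu>. x \<in> UNIV - X0" using prob_space.AE_in_set_eq_1[OF P Us] by simp
  then have "AE x in \<mu>. x \<notin> X0" by simp
  then have "AE x in distr \<mu>bar MX fst. x \<notin> X0" unfolding assms(11) .
  then have AE1: "AE p in \<mu>bar. fst p \<notin> X0" by (rule AE_distrD[OF fstm])
  have "AE y in distr \<mu>bar MY snd. \<forall>i. nonint (y i)"
    unfolding assms(12) by (rule nu_nonint[OF assms(6,7,8)])
  then have AE2: "AE p in \<mu>bar. \<forall>i. nonint (snd p i)" by (rule AE_distrD[OF sndm])
  have AE3: "AE p in \<mu>bar. \<forall>j. \<exists>n. G X0 p j n"
    using AE1 AE2 by eventually_elim (use good_exists[OF assms(1)] in blast)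
  have AE4: "AE p in \<mu>bar. (\<forall>j. \<exists>n. tile (tau X0 p) j = odo_tile (snd p) n j) \<and>
    (\<forall>j n. tile (tau X0 p) j = odo_tile (snd p) n j \<and> n > 0
        \<longrightarrow> in_language X0 (fst p) (tile (tau X0 p) j)) \<and>
    (\<forall>j n. tile (tau X0 p) j = odo_tile (snd p) n j
        \<longrightarrow> \<not> in_language X0 (fst p) (odo_tile (snd p) (Suc n) j))"
    using AE3 by eventually_elim (rule good_props)
  show ?thesis
    using tau_equivariant[of X0] AE4 unfolding AE_conj_iff by blast
qed

end
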